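(* Let $L$ be a finite nonassociative C-loop of order $n$ whose nucleus $N$ has order $m$. Then (i) $n/m\equiv 2 \pmod 6$ or $n/m\equiv 4\pmod 6$; (ii) $n$ is even; (iii) if $n=p^k$ for a prime $p$ and positive integer $k$, then $p=2$ and $k>3$. Moreover, for every integer $k>3$ there exists a nonassociative C-loop of order $2^k$ that is not a Steiner loop.
   Context: A C-loop is a loop satisfying $x(y(yz))=((xy)y)z$ for all $x,y,z$. The nucleus of a loop is the set of elements $a$ with $a(yz)=(ay)z$, $y(az)=(ya)z$, $y(za)=(yz)a$ for all $y,z$. A Steiner loop is a loop with neutral element $e$ satisfying $xx=e$, $(yx)x=y$, $xy=yx$ for all $x,y$. *)

theory Defs
  imports "HOL-Computational_Algebra.Primes"
begin

definition loop :: "'a set \<Rightarrow> ('a \<Rightarrow> 'a \<Rightarrow> 'a) \<Rightarrow> bool" where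
  "loop L f \<longleftrightarrow>
     (\<forall>x\<in>L. \<forall>y\<in>L. f x y \<in> L) \<and>
     (\<exists>e\<in>L. \<forall>x\<in>L. f e x = x \<and> f x e = x) \<and>
     (\<forall>a\<in>L. \<forall>b\<in>L. \<exists>!x. x \<in> L \<and> f a x = b) \<and>
     (\<forall>a\<in>L. \<forall>b\<in>L. \<exists>!y. y \<in> L \<and> f y a = b)"

definition c_loop :: "'a set \<Rightarrow> ('a \<Rightarrow> 'a \<Rightarrow> 'a) \<Rightarrow> bool" where
  "c_loop L f \<longleftrightarrow> loop L f \<and>
     (\<forall>x\<in>L. \<forall>y\<in>L. \<forall>z\<in>L. f x (f y (f y z)) = f (f (f x y) y) z)"

definition nucleus :: "'a set \<Rightarrow> ('a \<Rightarrow> 'a \<Rightarrow> 'a) \<Rightarrow> 'a set" where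
  "nucleus L f = {a \<in> L. \<forall>y\<in>L. \<forall>z\<in>L.
      f a (f y z) = f (f a y) z \<and> f y (f a z) = f (f y a) z \<and> f y (f z a) = f (f y z) a}"

definition nonassociative :: "'a set \<Rightarrow> ('a \<Rightarrow> 'a \<Rightarrow> 'a) \<Rightarrow> bool" where
  "nonassociative L f \<longleftrightarrow> (\<exists>x\<in>L. \<exists>y\<in>L. \<exists>z\<in>L. f x (f y z) \<noteq> f (f x y) z)"

definition steiner_loop :: "'a set \<Rightarrow> ('a \<Rightarrow> 'a \<Rightarrow> 'a) \<Rightarrow> bool" where
  "steiner_loop L f \<longleftrightarrow> loop L f \<and>
     (\<exists>e\<in>L. (\<forall>x\<in>L. f e x = x \<and> f x e = x) \<and>
        (\<forall>x\<in>L. \<forall>y\<in>L. f x x = e \<and> f (f y x) x = y \<and> f x y = f y x))"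

end

theory Submission
  imports Defs
begin


lemma orbit3:
  assumes "finite X" "\<forall>x\<in>X. r x \<in> X" "\<forall>x\<in>X. r (r (r x)) = x" "\<forall>x\<in>X. r x \<noteq> x"
  shows "3 dvd card X"
  using assms
proof (induction "card X" arbitrary: X rule: less_induct)
  case less
  show ?case
  proof (cases "X = {}")
    case True then show ?thesis by simp
  next
    case False
    then obtain x where x: "x \<in> X" by blast
    define Orb where "Orb = {x, r x, r (r x)}"
    have rx: "r x \<in> X" "r (r x) \<in> X" using less.prems x by auto
    have d1: "r x \<noteq> x" using less.prems x by auto
    have d2: "r (r x) \<noteq> r x" using less.prems rx by auto
    have d3: "r (r x) \<noteq> x"
    proof
      assume h: "r (r x) = x"
      then have "r (r (r x)) = r x" by simp
      then show False using less.prems x d1 by auto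
    qed
    have cO: "card Orb = 3" using d1 d2 d3 unfolding Orb_def by auto
    have sub: "Orb \<subseteq> X" using x rx unfolding Orb_def by auto
    define Y where "Y = X - Orb"
    have cY: "card Y = card X - 3" unfolding Y_def using card_Diff_subset[OF _ sub] cO less.prems(1)
      by (metis finite_subset sub)
    have cX: "card X \<ge> 3" using card_mono[OF less.prems(1) sub] cO by simp
    have clY: "\<forall>y\<in>Y. r y \<in> Y"
    proof
      fix y assume y: "y \<in> Y"
      then have yX: "y \<in> X" "y \<notin> Orb" unfolding Y_def by auto
      have "r y \<noteq> x"
      proof
        assume "r y = x" then have "r (r (r y)) = r (r x)" by simp
        then show False using yX less.prems unfolding Orb_def by auto
      qed
      moreover have "r y \<noteq> r x"
      proof
        assume "r y = r x" then have "r (r (r y)) = r (r (r x))" by simp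
        then show False using yX x less.prems unfolding Orb_def by auto
      qed
      moreover have "r y \<noteq> r (r x)"
      proof
        assume "r y = r (r x)" then have "r (r (r y)) = r (r (r (r x)))" by simp
        then show False using yX x less.prems unfolding Orb_def by auto
      qed
      ultimately show "r y \<in> Y" using yX less.prems unfolding Y_def Orb_def by auto
    qed
    have "3 dvd card Y"
      using less.hyps[of Y] cY cX clY less.prems False unfolding Y_def
      by (metis Diff_iff card_gt_0_iff diff_less finite_Diff zero_less_numeral)
    then show ?thesis using cY cX by (metis dvd_diffD le_add_diff_inverse2 dvd_refl dvd_add_triv_left_iff)
  qed
qed

lemma orbit2:
  assumes "finite X" "\<forall>x\<in>X. r x \<in> X" "\<forall>x\<in>X. r (r x) = x" "\<forall>x\<in>X. r x \<noteq> x"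
  shows "2 dvd card X"
  using assms
proof (induction "card X" arbitrary: X rule: less_induct)
  case less
  show ?case
  proof (cases "X = {}")
    case True then show ?thesis by simp
  next
    case False
    then obtain x where x: "x \<in> X" by blast
    define Orb where "Orb = {x, r x}"
    have rx: "r x \<in> X" using less.prems x by auto
    have d1: "r x \<noteq> x" using less.prems x by auto
    have cO: "card Orb = 2" using d1 unfolding Orb_def by auto
    have sub: "Orb \<subseteq> X" using x rx unfolding Orb_def by auto
    define Y where "Y = X - Orb"
    have cY: "card Y = card X - 2" unfolding Y_def using card_Diff_subset[OF _ sub] cO less.prems(1)
      by (metis finite_subset sub)
    have cX: "card X \<ge> 2" using card_mono[OF less.prems(1) sub] cO by simp
    have clY: "\<forall>y\<in>Y. r y \<in> Y"
    proof
      fix y assume y: "y \<in> Y"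
      then have yX: "y \<in> X" "y \<notin> Orb" unfolding Y_def by auto
      have "r y \<noteq> x"
      proof
        assume "r y = x" then have "r (r y) = r x" by simp
        then show False using yX less.prems unfolding Orb_def by auto
      qed
      moreover have "r y \<noteq> r x"
      proof
        assume "r y = r x" then have "r (r y) = r (r x)" by simp
        then show False using yX x less.prems unfolding Orb_def by auto
      qed
      ultimately show "r y \<in> Y" using yX less.prems unfolding Y_def Orb_def by auto
    qed
    have "2 dvd card Y"
      using less.hyps[of Y] cY cX clY less.prems False unfolding Y_def
      by (metis Diff_iff card_gt_0_iff diff_less finite_Diff zero_less_numeral)
    then show ?thesis using cY cX by (metis dvd_diffD le_add_diff_inverse2 dvd_refl dvd_add_triv_left_iff)
  qed
qed

lemma arith6:
  fixes q :: nat
  assumes "q \<ge> 2" "2 dvd (q - 2)" "3 dvd ((q - 1) * (q - 1) - (q - 1))"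
  shows "q mod 6 = 2 \<or> q mod 6 = 4"
proof -
  have "(q - 1) * (q - 1) - (q - 1) = (q - 1) * (q - 2)"
    using assms(1) by (simp add: diff_mult_distrib2)
  then have "3 dvd (q - 1) * (q - 2)" using assms(3) by simp
  then have "3 dvd (q - 1) \<or> 3 dvd (q - 2)"
    using prime_dvd_mult_iff[of "3::nat"] by simp
  then show ?thesis using assms(1,2) by presburger
qed

lemma steiner_mod6:
  assumes fin: "finite Q" and E: "E \<in> Q" and cl: "\<And>A B. A\<in>Q \<Longrightarrow> B\<in>Q \<Longrightarrow> g A B \<in> Q"
  and lid: "\<And>A. A\<in>Q \<Longrightarrow> g E A = A" and sq: "\<And>A. A\<in>Q \<Longrightarrow> g A A = E"
  and lft: "\<And>A B. A\<in>Q \<Longrightarrow> B\<in>Q \<Longrightarrow> g A (g A B) = B"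
  and com: "\<And>A B. A\<in>Q \<Longrightarrow> B\<in>Q \<Longrightarrow> g A B = g B A"
  and two: "card Q \<ge> 2"
  shows "card Q mod 6 = 2 \<or> card Q mod 6 = 4"
proof -
  have fixp: "g A B \<noteq> B" if "A\<in>Q" "B\<in>Q" "A \<noteq> E" for A B
  proof
    assume h: "g A B = B"
    have "g B (g B A) = A" using lft that by simp
    then have "g B B = A" using h com that by simp
    then show False using sq that by simp
  qed
  have ne: "g A B \<noteq> E" if "A\<in>Q" "B\<in>Q" "A \<noteq> B" for A B
  proof
    assume h: "g A B = E"
    have "B = g A (g A B)" using lft that by simp
    also have "\<dots> = A" using h lid com E that by simp
    finally show False using that by simp
  qed
  have "\<not> Q \<subseteq> {E}"
  proof
    assume "Q \<subseteq> {E}"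
    then have "card Q \<le> card {E}" by (rule card_mono[rotated]) simp
    then show False using two by simp
  qed
  then obtain A where A: "A\<in>Q" "A\<noteq>E" by blast
  have c2: "2 dvd card (Q - {E, A})"
  proof (rule orbit2[where r = "g A"])
    show "finite (Q - {E, A})" using fin by simp
    show "\<forall>x\<in>Q - {E, A}. g A x \<in> Q - {E, A}"
    proof
      fix B assume B: "B \<in> Q - {E, A}"
      have "g A B \<noteq> A"
      proof
        assume "g A B = A"
        then have "g A (g A B) = E" using sq A by simp
        then show False using lft A B by auto
      qed
      then show "g A B \<in> Q - {E, A}" using ne[of A B] cl[of A B] A B by auto
    qed
    show "\<forall>x\<in>Q - {E, A}. g A (g A x) = x" using lft A by auto
    show "\<forall>x\<in>Q - {E, A}. g A x \<noteq> x" using fixp A by auto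
  qed
  have cQ2: "card (Q - {E, A}) = card Q - 2" using A E fin by (simp add: card_Diff_subset)
  define Q' where "Q' = Q - {E}"
  define X where "X = {(A, B). A \<in> Q' \<and> B \<in> Q' \<and> A \<noteq> B}"
  have c3: "3 dvd card X"
  proof (rule orbit3[where r = "\<lambda>(A, B). (B, g A B)"])
    show "finite X" unfolding X_def Q'_def
      by (rule finite_subset[of _ "Q \<times> Q"]) (use fin in auto)
    show "\<forall>x\<in>X. (case x of (A, B) \<Rightarrow> (B, g A B)) \<in> X"
      unfolding X_def Q'_def using ne cl by (auto, metis fixp)
    show "\<forall>x\<in>X. (case (case (case x of (A, B) \<Rightarrow> (B, g A B)) of (A, B) \<Rightarrow> (B, g A B)) of
       (A, B) \<Rightarrow> (B, g A B)) = x"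
    proof
      fix x assume "x \<in> X"
      then obtain A B where x: "x = (A, B)" "A\<in>Q" "B\<in>Q" unfolding X_def Q'_def by auto
      have "g B (g A B) = A" using com lft x by metis
      moreover have "g (g A B) A = B" using com lft x cl by metis
      ultimately show "(case (case (case x of (A, B) \<Rightarrow> (B, g A B)) of (A, B) \<Rightarrow> (B, g A B)) of
       (A, B) \<Rightarrow> (B, g A B)) = x" using x by simp
    qed
    show "\<forall>x\<in>X. (case x of (A, B) \<Rightarrow> (B, g A B)) \<noteq> x" unfolding X_def by auto
  qed
  have XU: "Q' \<times> Q' = X \<union> (\<lambda>A. (A, A)) ` Q'" unfolding X_def by auto
  have "card (Q' \<times> Q') = card X + card ((\<lambda>A. (A, A)) ` Q')"
    unfolding XU by (rule card_Un_disjoint) (use fin in \<open>auto simp: X_def Q'_def intro: finite_subset[of _ "Q \<times> Q"]\<close>)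
  moreover have "card ((\<lambda>A. (A, A)) ` Q') = card Q'" by (rule card_image) (auto simp: inj_on_def)
  ultimately have "card X = card Q' * card Q' - card Q'" by (simp add: card_cartesian_product)
  moreover have "card Q' = card Q - 1" unfolding Q'_def using E fin by simp
  ultimately show ?thesis using arith6[of "card Q"] c2 c3 cQ2 two by simp
qed




locale cl =
  fixes L :: "'a set" and mult :: "'a \<Rightarrow> 'a \<Rightarrow> 'a" (infixl "\<cdot>" 70) and e :: 'a
  assumes cl[simp]: "x\<in>L \<Longrightarrow> y\<in>L \<Longrightarrow> x\<cdot>y \<in> L"
  and eL[simp]: "e\<in>L" and lid[simp]: "x\<in>L \<Longrightarrow> e\<cdot>x = x" and rid[simp]: "x\<in>L \<Longrightarrow> x\<cdot>e = x"
  and ldiv: "a\<in>L \<Longrightarrow> b\<in>L \<Longrightarrow> \<exists>!x. x\<in>L \<and> a\<cdot>x = b"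
  and rdiv: "a\<in>L \<Longrightarrow> b\<in>L \<Longrightarrow> \<exists>!y. y\<in>L \<and> y\<cdot>a = b"
  and C: "x\<in>L \<Longrightarrow> y\<in>L \<Longrightarrow> z\<in>L \<Longrightarrow> x\<cdot>(y\<cdot>(y\<cdot>z)) = ((x\<cdot>y)\<cdot>y)\<cdot>z"
begin

lemma lcan: "a\<in>L \<Longrightarrow> x\<in>L \<Longrightarrow> y\<in>L \<Longrightarrow> a\<cdot>x = a\<cdot>y \<Longrightarrow> x = y"
  using ldiv[of a "a\<cdot>x"] by auto
lemma rcan: "a\<in>L \<Longrightarrow> x\<in>L \<Longrightarrow> y\<in>L \<Longrightarrow> x\<cdot>a = y\<cdot>a \<Longrightarrow> x = y"
  using rdiv[of a "x\<cdot>a"] by auto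
lemma lcan_iff[simp]: "a\<in>L \<Longrightarrow> x\<in>L \<Longrightarrow> y\<in>L \<Longrightarrow> a\<cdot>x = a\<cdot>y \<longleftrightarrow> x = y"
  using lcan by blast
lemma rcan_iff[simp]: "a\<in>L \<Longrightarrow> x\<in>L \<Longrightarrow> y\<in>L \<Longrightarrow> x\<cdot>a = y\<cdot>a \<longleftrightarrow> x = y"
  using rcan by blast

lemma LL: "y\<in>L \<Longrightarrow> z\<in>L \<Longrightarrow> y\<cdot>(y\<cdot>z) = (y\<cdot>y)\<cdot>z"
  using C[of e y z] by simp
lemma RR: "x\<in>L \<Longrightarrow> y\<in>L \<Longrightarrow> (x\<cdot>y)\<cdot>y = x\<cdot>(y\<cdot>y)"
  using C[of x y e] by simp
lemma Mid: "x\<in>L \<Longrightarrow> y\<in>L \<Longrightarrow> z\<in>L \<Longrightarrow> x\<cdot>((y\<cdot>y)\<cdot>z) = (x\<cdot>(y\<cdot>y))\<cdot>z"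
  using C[of x y z] by (simp add: LL RR)

definition inv :: "'a \<Rightarrow> 'a" where "inv y = (THE r. r\<in>L \<and> y\<cdot>r = e)"

lemma inv1: "y\<in>L \<Longrightarrow> inv y \<in> L \<and> y\<cdot>inv y = e"
  unfolding inv_def using theI'[OF ldiv[of y e]] by simp

lemma invL[simp]: "y\<in>L \<Longrightarrow> inv y \<in> L" and rinv[simp]: "y\<in>L \<Longrightarrow> y\<cdot>inv y = e"
  using inv1 by auto

lemma RIP[simp]: "w\<in>L \<Longrightarrow> y\<in>L \<Longrightarrow> (w\<cdot>y)\<cdot>inv y = w"
proof -
  assume w: "w\<in>L" and y: "y\<in>L"
  obtain x where x: "x\<in>L" "x\<cdot>y = w" using rdiv[OF y w] by blast
  have "x\<cdot>(y\<cdot>(y\<cdot>inv y)) = ((x\<cdot>y)\<cdot>y)\<cdot>inv y" using C[of x y "inv y"] x y by simp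
  then show ?thesis using x y by simp
qed

lemma linv_aux: "y\<in>L \<Longrightarrow> \<exists>l\<in>L. l\<cdot>y = e \<and> (\<forall>u\<in>L. l\<cdot>(y\<cdot>u) = u)"
proof -
  assume y: "y\<in>L"
  obtain l where l: "l\<in>L" "l\<cdot>y = e" using rdiv[OF y eL] by blast
  have "l\<cdot>(y\<cdot>u) = u" if u: "u\<in>L" for u
  proof -
    obtain z where z: "z\<in>L" "y\<cdot>z = u" using ldiv[OF y u] by blast
    have "l\<cdot>(y\<cdot>(y\<cdot>z)) = ((l\<cdot>y)\<cdot>y)\<cdot>z" using C[of l y z] l y z by simp
    then show ?thesis using l y z by simp
  qed
  then show ?thesis using l by blast
qed

lemma linv[simp]: "y\<in>L \<Longrightarrow> inv y\<cdot>y = e" and LIP[simp]: "y\<in>L \<Longrightarrow> u\<in>L \<Longrightarrow> inv y\<cdot>(y\<cdot>u) = u"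
proof -
  assume y: "y\<in>L"
  obtain l where l: "l\<in>L" "l\<cdot>y = e" "\<forall>u\<in>L. l\<cdot>(y\<cdot>u) = u" using linv_aux[OF y] by blast
  have "l = inv y" using l(3)[rule_format, of "inv y"] l(1) y by simp
  then show "inv y\<cdot>y = e" using l by simp
  assume "u\<in>L" then show "inv y\<cdot>(y\<cdot>u) = u" using l \<open>l = inv y\<close> by simp
qed

lemma inv_inv[simp]: "y\<in>L \<Longrightarrow> inv (inv y) = y"
  using rinv[of "inv y"] linv[of y] lcan[of "inv y" "inv (inv y)" y] by simp

lemma LIP2[simp]: "y\<in>L \<Longrightarrow> u\<in>L \<Longrightarrow> y\<cdot>(inv y\<cdot>u) = u"
  using LIP[of "inv y" u] by simp
lemma RIP2[simp]: "y\<in>L \<Longrightarrow> w\<in>L \<Longrightarrow> (w\<cdot>inv y)\<cdot>y = w"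
  using RIP[of w "inv y"] by simp

lemma AAIP: "x\<in>L \<Longrightarrow> y\<in>L \<Longrightarrow> inv (x\<cdot>y) = inv y \<cdot> inv x"
proof -
  assume x: "x\<in>L" and y: "y\<in>L"
  have "inv (x\<cdot>y) \<cdot> x = inv y" using LIP[of "x\<cdot>y" "inv y"] x y by simp
  then have "(inv (x\<cdot>y) \<cdot> x)\<cdot>inv x = inv y \<cdot> inv x" by simp
  then show ?thesis using x y by simp
qed

abbreviation "N \<equiv> nucleus L (\<cdot>)"

lemma nucI: "a\<in>L \<Longrightarrow> (\<And>y z. y\<in>L \<Longrightarrow> z\<in>L \<Longrightarrow> a\<cdot>(y\<cdot>z) = (a\<cdot>y)\<cdot>z) \<Longrightarrow>
   (\<And>y z. y\<in>L \<Longrightarrow> z\<in>L \<Longrightarrow> y\<cdot>(a\<cdot>z) = (y\<cdot>a)\<cdot>z) \<Longrightarrow>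
   (\<And>y z. y\<in>L \<Longrightarrow> z\<in>L \<Longrightarrow> y\<cdot>(z\<cdot>a) = (y\<cdot>z)\<cdot>a) \<Longrightarrow> a \<in> N"
  unfolding nucleus_def by blast

lemma nL: "a\<in>N \<Longrightarrow> a\<in>L" unfolding nucleus_def by blast
lemma nl: "a\<in>N \<Longrightarrow> y\<in>L \<Longrightarrow> z\<in>L \<Longrightarrow> a\<cdot>(y\<cdot>z) = (a\<cdot>y)\<cdot>z" unfolding nucleus_def by blast
lemma nm: "a\<in>N \<Longrightarrow> y\<in>L \<Longrightarrow> z\<in>L \<Longrightarrow> y\<cdot>(a\<cdot>z) = (y\<cdot>a)\<cdot>z" unfolding nucleus_def by blast
lemma nr: "a\<in>N \<Longrightarrow> y\<in>L \<Longrightarrow> z\<in>L \<Longrightarrow> y\<cdot>(z\<cdot>a) = (y\<cdot>z)\<cdot>a" unfolding nucleus_def by blast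

lemma eN[simp]: "e \<in> N" by (rule nucI) auto

lemma mid_to_left:
  assumes a: "a\<in>L" and m: "\<And>u z. u\<in>L \<Longrightarrow> z\<in>L \<Longrightarrow> u\<cdot>(a\<cdot>z) = (u\<cdot>a)\<cdot>z"
    and y: "y\<in>L" and z: "z\<in>L"
  shows "inv a\<cdot>(y\<cdot>z) = (inv a\<cdot>y)\<cdot>z"
proof -
  define q where "q = inv a\<cdot>y"
  have q: "q\<in>L" using a y q_def by simp
  have iq: "inv q = inv y\<cdot>a" using AAIP[of "inv a" y] a y q_def by simp
  have "inv q\<cdot>(inv a\<cdot>(y\<cdot>z)) = inv y\<cdot>(a\<cdot>(inv a\<cdot>(y\<cdot>z)))"
    using m[of "inv y" "inv a\<cdot>(y\<cdot>z)"] iq a y z by simp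
  also have "\<dots> = z" using a y z by simp
  finally have "inv q\<cdot>(inv a\<cdot>(y\<cdot>z)) = z" .
  then have "q\<cdot>(inv q\<cdot>(inv a\<cdot>(y\<cdot>z))) = q\<cdot>z" by simp
  then show ?thesis using q a y z q_def by simp
qed

lemma mid_to_right:
  assumes a: "a\<in>L" and m: "\<And>u z. u\<in>L \<Longrightarrow> z\<in>L \<Longrightarrow> u\<cdot>(a\<cdot>z) = (u\<cdot>a)\<cdot>z"
    and y: "y\<in>L" and z: "z\<in>L"
  shows "y\<cdot>(z\<cdot>inv a) = (y\<cdot>z)\<cdot>inv a"
proof -
  define q where "q = z\<cdot>inv a"
  have q: "q\<in>L" using a z q_def by simp
  have iq: "inv q = a\<cdot>inv z" using AAIP[of z "inv a"] a z q_def by simp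
  have "((y\<cdot>z)\<cdot>inv a)\<cdot>inv q = (((y\<cdot>z)\<cdot>inv a)\<cdot>a)\<cdot>inv z"
    using m[of "(y\<cdot>z)\<cdot>inv a" "inv z"] iq a y z by simp
  also have "\<dots> = y" using a y z by simp
  finally have "((y\<cdot>z)\<cdot>inv a)\<cdot>inv q = y" .
  then have "(((y\<cdot>z)\<cdot>inv a)\<cdot>inv q)\<cdot>q = y\<cdot>q" by simp
  then show ?thesis using q a y z q_def by simp
qed

lemma sqN[simp]: "x\<in>L \<Longrightarrow> x\<cdot>x \<in> N"
proof -
  assume x: "x\<in>L"
  have m: "\<And>u z. u\<in>L \<Longrightarrow> z\<in>L \<Longrightarrow> u\<cdot>((inv x\<cdot>inv x)\<cdot>z) = (u\<cdot>(inv x\<cdot>inv x))\<cdot>z"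
    using Mid x by simp
  have i: "inv (inv x\<cdot>inv x) = x\<cdot>x" using AAIP[of "inv x" "inv x"] x by simp
  show ?thesis
  proof (rule nucI)
    show "x\<cdot>x\<in>L" using x by simp
  next
    fix y z assume "y\<in>L" "z\<in>L"
    then show "x\<cdot>x\<cdot>(y\<cdot>z) = x\<cdot>x\<cdot>y\<cdot>z" using mid_to_left[OF _ m] i x by (metis cl invL)
  next
    fix y z assume "y\<in>L" "z\<in>L"
    then show "y\<cdot>(x\<cdot>x\<cdot>z) = y\<cdot>(x\<cdot>x)\<cdot>z" using Mid x by simp
  next
    fix y z assume "y\<in>L" "z\<in>L"
    then show "y\<cdot>(z\<cdot>(x\<cdot>x)) = y\<cdot>z\<cdot>(x\<cdot>x)" using mid_to_right[OF _ m] i x by (metis cl invL)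
  qed
qed

lemma nmul[simp]: "a\<in>N \<Longrightarrow> b\<in>N \<Longrightarrow> a\<cdot>b \<in> N"
proof -
  assume a: "a\<in>N" and b: "b\<in>N"
  note [simp] = nL[OF a] nL[OF b]
  show ?thesis
  proof (rule nucI)
    fix y z assume [simp]: "y\<in>L" "z\<in>L"
    show "a\<cdot>b\<cdot>(y\<cdot>z) = a\<cdot>b\<cdot>y\<cdot>z"
      using nl[OF a, of b "y\<cdot>z"] nl[OF b, of y z] nl[OF a, of "b\<cdot>y" z] nl[OF a, of b y] by simp
    show "y\<cdot>(a\<cdot>b\<cdot>z) = y\<cdot>(a\<cdot>b)\<cdot>z"
      using nl[OF a, of b z] nm[OF a, of y "b\<cdot>z"] nm[OF b, of "y\<cdot>a" z] nm[OF a, of y b] by simp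
    show "y\<cdot>(z\<cdot>(a\<cdot>b)) = y\<cdot>z\<cdot>(a\<cdot>b)"
      using nm[OF a, of z b] nr[OF b, of y "z\<cdot>a"] nr[OF a, of y z] nm[OF a, of "y\<cdot>z" b] by simp
  qed simp
qed

lemma ninv[simp]: "a\<in>N \<Longrightarrow> inv a \<in> N"
proof -
  assume a: "a\<in>N"
  note [simp] = nL[OF a]
  show ?thesis
  proof (rule nucI)
    fix y z assume [simp]: "y\<in>L" "z\<in>L"
    show "inv a\<cdot>(y\<cdot>z) = inv a\<cdot>y\<cdot>z"
      by (rule mid_to_left) (auto intro: nm[OF a])
    show "y\<cdot>(z\<cdot>inv a) = y\<cdot>z\<cdot>inv a"
      by (rule mid_to_right) (auto intro: nm[OF a])
    have "y\<cdot>(inv a\<cdot>z) = ((y\<cdot>inv a)\<cdot>a)\<cdot>(inv a\<cdot>z)" by simp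
    also have "\<dots> = (y\<cdot>inv a)\<cdot>(a\<cdot>(inv a\<cdot>z))" using nm[OF a, of "y\<cdot>inv a" "inv a\<cdot>z"] by simp
    also have "\<dots> = (y\<cdot>inv a)\<cdot>z" by simp
    finally show "y\<cdot>(inv a\<cdot>z) = y\<cdot>inv a\<cdot>z" .
  qed simp
qed

lemma xax: "a\<in>N \<Longrightarrow> x\<in>L \<Longrightarrow> (x\<cdot>a)\<cdot>x \<in> N"
proof -
  assume a: "a\<in>N" and x: "x\<in>L"
  note [simp] = nL[OF a]
  have "(x\<cdot>a)\<cdot>(x\<cdot>a) = ((x\<cdot>a)\<cdot>x)\<cdot>a" using nr[OF a, of "x\<cdot>a" x] x by simp
  then have "(x\<cdot>a)\<cdot>x = ((x\<cdot>a)\<cdot>(x\<cdot>a))\<cdot>inv a" using x by simp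
  then show ?thesis using a x by simp
qed

lemma normal: "a\<in>N \<Longrightarrow> x\<in>L \<Longrightarrow> \<exists>b\<in>N. a\<cdot>x = x\<cdot>b"
proof -
  assume a: "a\<in>N" and x: "x\<in>L"
  note [simp] = nL[OF a]
  define s where "s = inv x\<cdot>inv x"
  have s: "s\<in>N" using s_def x by simp
  have sx: "s\<cdot>x = inv x" using s_def x by simp
  have "inv x\<cdot>(a\<cdot>x) = s\<cdot>(x\<cdot>(a\<cdot>x))" using sx nl[OF s, of x "a\<cdot>x"] x by simp
  also have "\<dots> = s\<cdot>((x\<cdot>a)\<cdot>x)" using nm[OF a, of x x] x by simp
  finally have "inv x\<cdot>(a\<cdot>x) \<in> N" using s xax[OF a x] by simp
  moreover have "a\<cdot>x = x\<cdot>(inv x\<cdot>(a\<cdot>x))" using x by simp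
  ultimately show ?thesis by blast
qed

lemma nL'[simp]: "a\<in>N \<Longrightarrow> a\<in>L" by (rule nL)

definition Cs :: "'a \<Rightarrow> 'a set" where "Cs x = (\<lambda>n. x\<cdot>n) ` N"

lemma Cs_sub: "x\<in>L \<Longrightarrow> Cs x \<subseteq> L" unfolding Cs_def by auto
lemma Cs_self[simp]: "x\<in>L \<Longrightarrow> x \<in> Cs x" unfolding Cs_def using eN by (metis image_eqI rid)
lemma Cs_card: "x\<in>L \<Longrightarrow> card (Cs x) = card N"
  unfolding Cs_def by (rule card_image) (auto simp: inj_on_def)

lemma Cs_mem: "y \<in> Cs x \<longleftrightarrow> (\<exists>n\<in>N. y = x\<cdot>n)" unfolding Cs_def by auto

lemma Cs_eq: assumes x: "x\<in>L" and y: "y \<in> Cs x" shows "Cs y = Cs x"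
proof -
  obtain n where n: "n\<in>N" "y = x\<cdot>n" using y Cs_mem by blast
  show ?thesis
  proof
    show "Cs y \<subseteq> Cs x"
    proof
      fix w assume "w \<in> Cs y"
      then obtain n' where n': "n'\<in>N" "w = y\<cdot>n'" using Cs_mem by blast
      have "w = x\<cdot>(n\<cdot>n')" using n n' nr[OF n'(1), of x n] x by simp
      then show "w \<in> Cs x" using n n' Cs_mem by auto
    qed
  next
    show "Cs x \<subseteq> Cs y"
    proof
      fix w assume "w \<in> Cs x"
      then obtain n' where n': "n'\<in>N" "w = x\<cdot>n'" using Cs_mem by blast
      have "x = y\<cdot>inv n" using n x by simp
      then have "w = y\<cdot>(inv n\<cdot>n')" using n n' nr[OF n'(1), of y "inv n"] x by simp
      then show "w \<in> Cs y" using n n' Cs_mem by auto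
    qed
  qed
qed

lemma Cs_eq_iff: "x\<in>L \<Longrightarrow> y\<in>L \<Longrightarrow> Cs x = Cs y \<longleftrightarrow> y \<in> Cs x"
  using Cs_eq Cs_self by metis

lemma Cs_e: "Cs e = N" unfolding Cs_def by (auto simp: image_iff)

lemma Cs_N_iff: "x\<in>L \<Longrightarrow> Cs x = N \<longleftrightarrow> x \<in> N"
  using Cs_eq_iff[of e x] Cs_e by auto

lemma Cs_mult: assumes x: "x\<in>L" and w: "w\<in>L" and y: "y\<in>Cs x" and z: "z\<in>Cs w"
  shows "Cs (y\<cdot>z) = Cs (x\<cdot>w)"
proof -
  obtain n1 where n1: "n1\<in>N" "y = x\<cdot>n1" using y Cs_mem by blast
  obtain n2 where n2: "n2\<in>N" "z = w\<cdot>n2" using z Cs_mem by blast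
  obtain n3 where n3: "n3\<in>N" "n1\<cdot>w = w\<cdot>n3" using normal[OF n1(1) w] by blast
  have "y\<cdot>z = ((x\<cdot>n1)\<cdot>w)\<cdot>n2" using nr[OF n2(1), of "x\<cdot>n1" w] n1 n2 x w by simp
  also have "\<dots> = (x\<cdot>(w\<cdot>n3))\<cdot>n2" using nm[OF n1(1), of x w] n3 x w by simp
  also have "\<dots> = ((x\<cdot>w)\<cdot>n3)\<cdot>n2" using nr[OF n3(1), of x w] x w by simp
  also have "\<dots> = (x\<cdot>w)\<cdot>(n3\<cdot>n2)" using nr[OF n2(1), of "x\<cdot>w" n3] x w n3 by simp
  finally have "y\<cdot>z \<in> Cs (x\<cdot>w)" using Cs_mem n2 n3 by auto
  from Cs_eq[OF cl[OF x w] this] show ?thesis .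
qed

lemma Cs_sq: "x\<in>L \<Longrightarrow> Cs (x\<cdot>x) = N" using Cs_N_iff by simp

lemma Cs_left: assumes x: "x\<in>L" and y: "y\<in>L" shows "Cs (x\<cdot>(x\<cdot>y)) = Cs y"
proof -
  obtain b where b: "b\<in>N" "(x\<cdot>x)\<cdot>y = y\<cdot>b" using normal[of "x\<cdot>x" y] x y by auto
  have "x\<cdot>(x\<cdot>y) = y\<cdot>b" using LL x y b by simp
  then show ?thesis using Cs_eq[OF y] Cs_mem b by auto
qed

lemma Cs_right: assumes x: "x\<in>L" and y: "y\<in>L" shows "Cs ((y\<cdot>x)\<cdot>x) = Cs y"
proof -
  have "(y\<cdot>x)\<cdot>x = y\<cdot>(x\<cdot>x)" using RR x y by simp
  then have "(y\<cdot>x)\<cdot>x \<in> Cs y" unfolding Cs_mem using sqN[OF x] by blast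
  then show ?thesis using Cs_eq[OF y] by blast
qed

lemma inv_Cs: "x\<in>L \<Longrightarrow> inv x \<in> Cs x"
proof -
  assume x: "x\<in>L"
  have "inv x = x\<cdot>(inv x\<cdot>inv x)" using x by simp
  moreover have "inv x\<cdot>inv x \<in> N" using x by simp
  ultimately show ?thesis unfolding Cs_mem by blast
qed

lemma Cs_comm: assumes x: "x\<in>L" and y: "y\<in>L" shows "Cs (x\<cdot>y) = Cs (y\<cdot>x)"
proof -
  have "Cs (inv y\<cdot>inv x) = Cs (y\<cdot>x)" using Cs_mult[OF y x inv_Cs[OF y] inv_Cs[OF x]] .
  moreover have "Cs (inv (x\<cdot>y)) = Cs (x\<cdot>y)" using Cs_eq[OF cl[OF x y] inv_Cs[OF cl[OF x y]]] .
  ultimately show ?thesis using AAIP[OF x y] by simp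
qed

definition "Qs = Cs ` L"
definition "rep A = (SOME x. x\<in>L \<and> A = Cs x)"
definition "qm A B = Cs (rep A \<cdot> rep B)"

lemma rep: "x\<in>L \<Longrightarrow> rep (Cs x) \<in> L \<and> rep (Cs x) \<in> Cs x"
proof -
  assume x: "x\<in>L"
  have "rep (Cs x) \<in> L \<and> Cs x = Cs (rep (Cs x))" unfolding rep_def
    by (rule someI[of _ x]) (use x in simp)
  then show ?thesis using Cs_eq_iff x by metis
qed

lemma qm_Cs: "x\<in>L \<Longrightarrow> y\<in>L \<Longrightarrow> qm (Cs x) (Cs y) = Cs (x\<cdot>y)"
  unfolding qm_def using Cs_mult rep by blast

lemma Qs_cases: "A \<in> Qs \<Longrightarrow> (\<And>x. x\<in>L \<Longrightarrow> A = Cs x \<Longrightarrow> P) \<Longrightarrow> P"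
  unfolding Qs_def by blast

lemma card_L: assumes fin: "finite L" shows "card L = card N * card Qs"
proof -
  have U: "\<Union>Qs = L" unfolding Qs_def using Cs_sub Cs_self by blast
  have "card N * card Qs = card (\<Union>Qs)"
  proof (rule card_partition)
    show "finite Qs" unfolding Qs_def using fin by simp
    show "finite (\<Union>Qs)" using U fin by simp
    show "\<And>c. c \<in> Qs \<Longrightarrow> card c = card N" unfolding Qs_def using Cs_card by auto
    show "\<And>c1 c2. c1 \<in> Qs \<Longrightarrow> c2 \<in> Qs \<Longrightarrow> c1 \<noteq> c2 \<Longrightarrow> c1 \<inter> c2 = {}"
    proof -
      fix c1 c2 assume "c1 \<in> Qs" "c2 \<in> Qs" "c1 \<noteq> c2"
      then obtain x y where xy: "x\<in>L" "y\<in>L" "c1 = Cs x" "c2 = Cs y" "Cs x \<noteq> Cs y"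
        unfolding Qs_def by blast
      show "c1 \<inter> c2 = {}"
      proof (rule ccontr)
        assume "c1 \<inter> c2 \<noteq> {}"
        then obtain z where "z \<in> Cs x" "z \<in> Cs y" using xy by blast
        then show False using Cs_eq xy by metis
      qed
    qed
  qed
  then show ?thesis using U by simp
qed

lemma all_N_assoc: "L \<subseteq> N \<Longrightarrow> \<not> nonassociative L (\<cdot>)"
  unfolding nonassociative_def using nl by blast

lemma part1: assumes fin: "finite L" and na: "nonassociative L (\<cdot>)"
  shows "card Qs mod 6 = 2 \<or> card Qs mod 6 = 4"
proof (rule steiner_mod6[where E = N and g = qm])
  show "finite Qs" unfolding Qs_def using fin by simp
  show "N \<in> Qs" unfolding Qs_def using Cs_e eL by blast
  show "\<And>A B. A \<in> Qs \<Longrightarrow> B \<in> Qs \<Longrightarrow> qm A B \<in> Qs"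
    by (elim Qs_cases) (simp add: qm_Cs Qs_def)
  show "\<And>A. A \<in> Qs \<Longrightarrow> qm N A = A"
    by (elim Qs_cases) (metis Cs_e eL lid qm_Cs)
  show "\<And>A. A \<in> Qs \<Longrightarrow> qm A A = N"
    by (elim Qs_cases) (simp add: qm_Cs Cs_sq)
  show "\<And>A B. A \<in> Qs \<Longrightarrow> B \<in> Qs \<Longrightarrow> qm A (qm A B) = B"
    by (elim Qs_cases) (simp add: qm_Cs Cs_left)
  show "\<And>A B. A \<in> Qs \<Longrightarrow> B \<in> Qs \<Longrightarrow> qm A B = qm B A"
    by (elim Qs_cases) (simp add: qm_Cs Cs_comm)
  show "2 \<le> card Qs"
  proof (rule ccontr)
    assume "\<not> 2 \<le> card Qs"
    moreover have "finite Qs" "N \<in> Qs" unfolding Qs_def using fin Cs_e eL by auto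
    moreover have "card Qs > 0" using calculation(2,3) card_gt_0_iff by blast
    ultimately have "card Qs = 1" by simp
    then obtain X where "Qs = {X}" by (rule card_1_singletonE)
    then have "Qs = {N}" using \<open>N \<in> Qs\<close> by simp
    then have "L \<subseteq> N" unfolding Qs_def using Cs_N_iff by (metis imageI singletonD subsetI)
    then show False using all_N_assoc na by simp
  qed
qed

definition "assoc3 a b c \<longleftrightarrow> a\<cdot>(b\<cdot>c) = (a\<cdot>b)\<cdot>c"

lemma G1: assumes a: "a\<in>L" and c: "c\<in>L" and b: "b \<in> Cs a" shows "assoc3 a b c"
proof -
  obtain n where n: "n\<in>N" "b = a\<cdot>n" using b Cs_mem by blast
  have "a\<cdot>(b\<cdot>c) = a\<cdot>(a\<cdot>(n\<cdot>c))" using nm[OF n(1), of a c] n a c by simp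
  also have "\<dots> = (a\<cdot>a)\<cdot>(n\<cdot>c)" using LL a c n by simp
  also have "\<dots> = ((a\<cdot>a)\<cdot>n)\<cdot>c" using nm[OF n(1), of "a\<cdot>a" c] a c by simp
  also have "\<dots> = (a\<cdot>b)\<cdot>c" using LL[of a n] n a by simp
  finally show ?thesis unfolding assoc3_def .
qed

lemma G1': assumes a: "a\<in>L" and b: "b\<in>L" and c: "c \<in> Cs b" shows "assoc3 a b c"
proof -
  obtain n where n: "n\<in>N" "c = b\<cdot>n" using c Cs_mem by blast
  have "a\<cdot>(b\<cdot>c) = a\<cdot>((b\<cdot>b)\<cdot>n)" using LL[of b n] n b by simp
  also have "\<dots> = (a\<cdot>(b\<cdot>b))\<cdot>n" using nr[OF n(1), of a "b\<cdot>b"] a b by simp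
  also have "\<dots> = ((a\<cdot>b)\<cdot>b)\<cdot>n" using RR a b by simp
  also have "\<dots> = (a\<cdot>b)\<cdot>c" using nr[OF n(1), of "a\<cdot>b" b] n a b by simp
  finally show ?thesis unfolding assoc3_def .
qed

lemma ipab: assumes a: "a\<in>L" and b: "b\<in>L" shows "a\<cdot>(b\<cdot>(a\<cdot>b)) = (a\<cdot>b)\<cdot>(a\<cdot>b)"
proof -
  define s where "s = (a\<cdot>b)\<cdot>(a\<cdot>b)"
  have s: "s \<in> N" using s_def a b by simp
  have "a\<cdot>b = inv (a\<cdot>b)\<cdot>s" using s_def a b by simp
  also have "\<dots> = (inv b\<cdot>inv a)\<cdot>s" using AAIP a b by simp
  also have "\<dots> = inv b\<cdot>(inv a\<cdot>s)" using nr[OF s, of "inv b" "inv a"] a b by simp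
  finally have "b\<cdot>(a\<cdot>b) = inv a\<cdot>s" using a b s by simp
  then show ?thesis using a b s s_def by simp
qed

lemma G2: assumes a: "a\<in>L" and b: "b\<in>L" and c: "c \<in> Cs (a\<cdot>b)" shows "assoc3 a b c"
proof -
  obtain n where n: "n\<in>N" "c = (a\<cdot>b)\<cdot>n" using c Cs_mem by blast
  have "a\<cdot>(b\<cdot>c) = a\<cdot>((b\<cdot>(a\<cdot>b))\<cdot>n)" using nr[OF n(1), of b "a\<cdot>b"] n a b by simp
  also have "\<dots> = (a\<cdot>(b\<cdot>(a\<cdot>b)))\<cdot>n" using nr[OF n(1), of a "b\<cdot>(a\<cdot>b)"] a b by simp
  also have "\<dots> = ((a\<cdot>b)\<cdot>(a\<cdot>b))\<cdot>n" using ipab a b by simp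
  also have "\<dots> = (a\<cdot>b)\<cdot>c" using nr[OF n(1), of "a\<cdot>b" "a\<cdot>b"] n a b by simp
  finally show ?thesis unfolding assoc3_def .
qed

lemma G3: "a\<in>L \<Longrightarrow> b\<in>L \<Longrightarrow> c\<in>L \<Longrightarrow> a\<in>N \<or> b\<in>N \<or> c\<in>N \<Longrightarrow> assoc3 a b c"
  unfolding assoc3_def using nl nm nr by blast

definition "cenexp2 \<longleftrightarrow> (\<forall>v\<in>N. v\<cdot>v = e \<and> (\<forall>x\<in>L. v\<cdot>x = x\<cdot>v))"

lemma G4: assumes ce: cenexp2 and a: "a\<in>L" and b: "b\<in>L" and c: "c \<in> Cs a" shows "assoc3 a b c"
proof -
  obtain n where n: "n\<in>N" "c = a\<cdot>n" using c Cs_mem by blast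
  have "b\<cdot>a \<in> Cs (a\<cdot>b)" using Cs_comm[OF a b] Cs_eq_iff[of "a\<cdot>b" "b\<cdot>a"] a b by simp
  then obtain v where v: "v\<in>N" "b\<cdot>a = (a\<cdot>b)\<cdot>v" using Cs_mem by blast
  have vv: "v\<cdot>v = e" and vc: "\<And>x. x\<in>L \<Longrightarrow> v\<cdot>x = x\<cdot>v" using ce v unfolding cenexp2_def by auto
  have aac: "(a\<cdot>a)\<cdot>b = b\<cdot>(a\<cdot>a)" using ce a b unfolding cenexp2_def by simp
  have ab: "a\<cdot>b = (b\<cdot>a)\<cdot>v" using v vv nr[OF v(1), of "a\<cdot>b" v] a b by simp
  have "a\<cdot>(b\<cdot>a) = a\<cdot>((a\<cdot>b)\<cdot>v)" using v by simp
  also have "\<dots> = ((a\<cdot>a)\<cdot>b)\<cdot>v" using nr[OF v(1), of a "a\<cdot>b"] LL a b v by simp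
  finally have 1: "a\<cdot>(b\<cdot>a) = (b\<cdot>(a\<cdot>a))\<cdot>v" using aac by simp
  have "(a\<cdot>b)\<cdot>a = ((b\<cdot>a)\<cdot>v)\<cdot>a" using ab by simp
  also have "\<dots> = (b\<cdot>a)\<cdot>(a\<cdot>v)" using nm[OF v(1), of "b\<cdot>a" a] vc[of a] a b v(1) by simp
  also have "\<dots> = (b\<cdot>(a\<cdot>a))\<cdot>v" using nr[OF v(1), of "b\<cdot>a" a] RR[of b a] a b v(1) by simp
  finally have 2: "(a\<cdot>b)\<cdot>a = a\<cdot>(b\<cdot>a)" using 1 by simp
  have "a\<cdot>(b\<cdot>c) = (a\<cdot>(b\<cdot>a))\<cdot>n" using n nr[OF n(1), of b a] nr[OF n(1), of a "b\<cdot>a"] a b by simp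
  also have "\<dots> = (a\<cdot>b)\<cdot>c" using 2 n nr[OF n(1), of "a\<cdot>b" a] a b by simp
  finally show ?thesis unfolding assoc3_def .
qed

lemma assoc_all: "(\<And>a b c. a\<in>L \<Longrightarrow> b\<in>L \<Longrightarrow> c\<in>L \<Longrightarrow> assoc3 a b c) \<Longrightarrow> \<not> nonassociative L (\<cdot>)"
  unfolding nonassociative_def assoc3_def by blast

lemma Cs_cong: assumes x: "x\<in>L" and x': "x'\<in>L" and y: "y\<in>L" and h: "Cs x = Cs x'"
  shows "Cs (x\<cdot>y) = Cs (x'\<cdot>y)"
proof -
  have "x' \<in> Cs x" using h Cs_eq_iff[OF x x'] by simp
  from Cs_mult[OF x y this Cs_self[OF y]] show ?thesis by (rule sym)
qed
lemma Cs_cong2: assumes x: "x\<in>L" and y': "y'\<in>L" and y: "y\<in>L" and h: "Cs y = Cs y'"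
  shows "Cs (x\<cdot>y) = Cs (x\<cdot>y')"
proof -
  have "y' \<in> Cs y" using h Cs_eq_iff[OF y y'] by simp
  from Cs_mult[OF x y Cs_self[OF x] this] show ?thesis by (rule sym)
qed

lemma q2: assumes fin: "finite L" and q: "card Qs = 2" shows "\<not> nonassociative L (\<cdot>)"
proof (rule assoc_all)
  fix a b c assume abc: "a\<in>L" "b\<in>L" "c\<in>L"
  show "assoc3 a b c"
  proof (cases "a\<in>N \<or> b\<in>N \<or> c\<in>N")
    case True then show ?thesis using G3 abc by blast
  next
    case False
    have "finite Qs" unfolding Qs_def using fin by simp
    moreover have "N \<in> Qs" unfolding Qs_def using Cs_e eL by blast
    ultimately have "card (Qs - {N}) = 1" using q by simp
    then obtain X where X: "Qs - {N} = {X}" by (rule card_1_singletonE)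
    have "Cs a \<in> Qs - {N}" "Cs b \<in> Qs - {N}" unfolding Qs_def using False abc Cs_N_iff by auto
    then have "Cs a = Cs b" using X by simp
    then have "b \<in> Cs a" using Cs_eq_iff abc by simp
    then show ?thesis using G1 abc by blast
  qed
qed

lemma q4: assumes fin: "finite L" and q: "card Qs = 4" and ce: cenexp2 shows "\<not> nonassociative L (\<cdot>)"
proof (rule assoc_all)
  fix a b c assume abc: "a\<in>L" "b\<in>L" "c\<in>L"
  show "assoc3 a b c"
  proof (cases "a\<in>N \<or> b\<in>N \<or> c\<in>N \<or> b \<in> Cs a \<or> c \<in> Cs b")
    case True
    then show ?thesis
    proof (elim disjE)
      assume "b \<in> Cs a" then show ?thesis using G1 abc by simp
    next
      assume "c \<in> Cs b" then show ?thesis using G1' abc by simp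
    qed (use G3 abc in auto)
  next
    case False
    have NA: "Cs a \<noteq> N" "Cs b \<noteq> N" "Cs c \<noteq> N" using False Cs_N_iff abc by auto
    have AB: "Cs a \<noteq> Cs b" "Cs c \<noteq> Cs b" using False Cs_eq_iff[of a b] Cs_eq_iff[of b c] abc by auto
    have l: "Cs (a\<cdot>(a\<cdot>b)) = Cs b" using Cs_left abc by simp
    have r: "Cs ((a\<cdot>b)\<cdot>b) = Cs a" using Cs_right abc by simp
    have d1: "Cs (a\<cdot>b) \<noteq> N"
    proof
      assume "Cs (a\<cdot>b) = N"
      then have "Cs (a\<cdot>(a\<cdot>b)) = Cs (a\<cdot>e)" using Cs_cong2[of a e "a\<cdot>b"] Cs_e abc by simp
      then show False using l AB abc by simp
    qed
    have d2: "Cs (a\<cdot>b) \<noteq> Cs a"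
    proof
      assume "Cs (a\<cdot>b) = Cs a"
      then have "Cs (a\<cdot>(a\<cdot>b)) = Cs (a\<cdot>a)" using Cs_cong2[of a a "a\<cdot>b"] abc by simp
      then show False using l NA Cs_sq abc by simp
    qed
    have d3: "Cs (a\<cdot>b) \<noteq> Cs b"
    proof
      assume "Cs (a\<cdot>b) = Cs b"
      then have "Cs ((a\<cdot>b)\<cdot>b) = Cs (b\<cdot>b)" using Cs_cong[of "a\<cdot>b" b b] abc by simp
      then show False using r NA Cs_sq abc by simp
    qed
    have sub: "{N, Cs a, Cs b, Cs (a\<cdot>b)} \<subseteq> Qs" unfolding Qs_def using Cs_e eL abc by auto
    have c4: "card {N, Cs a, Cs b, Cs (a\<cdot>b)} = 4" using NA AB d1 d2 d3 by (simp add: eq_commute)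
    have "finite Qs" unfolding Qs_def using fin by simp
    then have "{N, Cs a, Cs b, Cs (a\<cdot>b)} = Qs" using card_subset_eq[OF _ sub] c4 q by simp
    moreover have "Cs c \<in> Qs" unfolding Qs_def using abc by simp
    ultimately have "Cs c = Cs a \<or> Cs c = Cs (a\<cdot>b)" using NA AB by blast
    then show ?thesis
    proof
      assume "Cs c = Cs a" then have "c \<in> Cs a" using Cs_eq_iff[of a c] abc by simp
      then show ?thesis using G4[OF ce] abc by simp
    next
      assume "Cs c = Cs (a\<cdot>b)" then have "c \<in> Cs (a\<cdot>b)" using Cs_eq_iff[of "a\<cdot>b" c] abc by simp
      then show ?thesis using G2 abc by simp
    qed
  qed
qed

lemma cenexp2_small: assumes fin: "finite L" and m: "card N \<le> 2" shows cenexp2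
  unfolding cenexp2_def
proof
  fix v assume v: "v \<in> N"
  show "v\<cdot>v = e \<and> (\<forall>x\<in>L. v\<cdot>x = x\<cdot>v)"
  proof (cases "v = e")
    case True then show ?thesis by simp
  next
    case False
    have finN: "finite N" using fin finite_subset[of N L] nL by blast
    have "{e, v} \<subseteq> N" using v by simp
    moreover have "card {e, v} = 2" using False by simp
    ultimately have Nev: "{e, v} = N" using card_seteq[OF finN] m by simp
    have vL: "v\<in>L" using v by simp
    have "v\<cdot>v \<in> N" using v by simp
    moreover have "v\<cdot>v \<noteq> v"
    proof
      assume "v\<cdot>v = v"
      then have "v\<cdot>v = v\<cdot>e" using vL by simp
      then show False using False vL lcan[of v v e] by simp
    qed
    ultimately have 1: "v\<cdot>v = e" using Nev by blast
    have "\<forall>x\<in>L. v\<cdot>x = x\<cdot>v"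
    proof
      fix x assume x: "x\<in>L"
      obtain b where b: "b\<in>N" "v\<cdot>x = x\<cdot>b" using normal[OF v x] by blast
      have "b \<noteq> e"
      proof
        assume "b = e"
        then have "v\<cdot>x = e\<cdot>x" using b(2) x by simp
        then show False using rcan[of x v e] x vL False by simp
      qed
      then show "v\<cdot>x = x\<cdot>v" using b Nev by blast
    qed
    then show ?thesis using 1 by simp
  qed
qed

lemma lfix[simp]: "x\<in>L \<Longrightarrow> y\<in>L \<Longrightarrow> (y\<cdot>x = x) \<longleftrightarrow> y = e"
  using rcan_iff[of x y e] by simp
lemma lfix'[simp]: "x\<in>L \<Longrightarrow> y\<in>L \<Longrightarrow> (x = y\<cdot>x) \<longleftrightarrow> y = e"
  using lfix[of x y] by (metis)
lemma rfix[simp]: "x\<in>L \<Longrightarrow> y\<in>L \<Longrightarrow> (x\<cdot>y = x) \<longleftrightarrow> y = e"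
  using lcan_iff[of x y e] by simp
lemma rfix'[simp]: "x\<in>L \<Longrightarrow> y\<in>L \<Longrightarrow> (x = x\<cdot>y) \<longleftrightarrow> y = e"
  using rfix[of x y] by (metis)

lemma q8: assumes fin: "finite L" and m: "card N = 1" and n: "card L = 8" shows "\<not> nonassociative L (\<cdot>)"
proof -
  have finN: "finite N" using fin finite_subset[of N L] nL by blast
  have N1: "N = {e}" using m eN by (metis card_1_singletonE singletonD)
  have Cs1: "Cs x = {x}" if x: "x\<in>L" for x
  proof -
    have "card (Cs x) = 1" using Cs_card[OF x] m by simp
    then obtain y where "Cs x = {y}" by (rule card_1_singletonE)
    then show ?thesis using Cs_self[OF x] by simp
  qed
  have S1: "x\<cdot>x = e" if "x\<in>L" for x using sqN[OF that] N1 by simp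
  have S2: "x\<cdot>(x\<cdot>y) = y" if "x\<in>L" "y\<in>L" for x y using Cs_left[OF that] Cs1 that by simp
  have S4: "x\<cdot>y = y\<cdot>x" if "x\<in>L" "y\<in>L" for x y using Cs_comm[OF that] Cs1 that by simp
  have S3: "(y\<cdot>x)\<cdot>x = y" if "x\<in>L" "y\<in>L" for x y using RR[of y x] S1 that by simp
  have sw1: "y = x\<cdot>z" if "x\<in>L" "y\<in>L" "x\<cdot>y = z" for x y z using S2[OF that(1,2)] that(3) by simp
  have sw2: "x = z\<cdot>y" if "x\<in>L" "y\<in>L" "x\<cdot>y = z" for x y z using S3[OF that(2,1)] that(3) by simp
  have ce: cenexp2 using cenexp2_small[OF fin] m by simp
  show ?thesis
  proof (rule assoc_all)
    fix a b c assume a: "a\<in>L" and b: "b\<in>L" and c: "c\<in>L"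
    show "assoc3 a b c"
    proof (cases "a = e \<or> b = e \<or> c = e \<or> b = a \<or> c = b \<or> c = a \<or> c = a\<cdot>b")
      case True
      then show ?thesis
      proof (elim disjE)
        assume "b = a" then show ?thesis using G1 a c by simp
      next
        assume "c = b" then show ?thesis using G1' a b by simp
      next
        assume "c = a" then show ?thesis using G4[OF ce] a b by simp
      next
        assume "c = a\<cdot>b" then show ?thesis using G2 a b by simp
      qed (use G3 a b c in auto)
    next
      case False
      then have h: "a \<noteq> e" "b \<noteq> e" "c \<noteq> e" "a \<noteq> b" "c \<noteq> b" "c \<noteq> a" "c \<noteq> a\<cdot>b" by auto
      note [simp] = a b c S1 S2 S3
      have d2: "a\<cdot>b \<noteq> e" proof assume h0: "a\<cdot>b = e" have "b = a\<cdot>e" using sw1[OF a b h0] by simp then show False using h by simp qed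
      have d3: "a\<cdot>c \<noteq> e" proof assume h0: "a\<cdot>c = e" have "c = a\<cdot>e" using sw1[OF a c h0] by simp then show False using h by simp qed
      have d4: "b\<cdot>c \<noteq> e" proof assume h0: "b\<cdot>c = e" have "c = b\<cdot>e" using sw1[OF b c h0] by simp then show False using h by simp qed
      have d6: "a\<cdot>b \<noteq> a" proof assume h0: "a\<cdot>b = a" have "b = a\<cdot>a" using sw1[OF a b h0] by simp then show False using h by simp qed
      have d7: "a\<cdot>c \<noteq> a" proof assume h0: "a\<cdot>c = a" have "c = a\<cdot>a" using sw1[OF a c h0] by simp then show False using h by simp qed
      have d8: "b\<cdot>c \<noteq> a" proof assume h0: "b\<cdot>c = a" have "c = b\<cdot>a" using sw1[OF b c h0] by simp then show False using h S4[OF b a] by simp qed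
      have d9: "a\<cdot>b \<noteq> b" proof assume h0: "a\<cdot>b = b" have "a = b\<cdot>b" using sw2[OF a b h0] by simp then show False using h by simp qed
      have d10: "a\<cdot>c \<noteq> b" proof assume h0: "a\<cdot>c = b" have "c = a\<cdot>b" using sw1[OF a c h0] by simp then show False using h by simp qed
      have d11: "b\<cdot>c \<noteq> b" proof assume h0: "b\<cdot>c = b" have "c = b\<cdot>b" using sw1[OF b c h0] by simp then show False using h by simp qed
      have d13: "a\<cdot>b \<noteq> a\<cdot>c" using h by simp
      have d14: "a\<cdot>b \<noteq> b\<cdot>c" proof assume h0: "a\<cdot>b = b\<cdot>c" have "a\<cdot>b = c\<cdot>b" using h0 S4[OF b c] by simp then show False using h by simp qed
      have d15: "a\<cdot>c \<noteq> c" proof assume h0: "a\<cdot>c = c" have "a = c\<cdot>c" using sw2[OF a c h0] by simp then show False using h by simp qed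
      have d16: "b\<cdot>c \<noteq> c" proof assume h0: "b\<cdot>c = c" have "b = c\<cdot>c" using sw2[OF b c h0] by simp then show False using h by simp qed
      have d17: "a\<cdot>c \<noteq> b\<cdot>c" using h by simp
      define T where "T = {e, a, b, a\<cdot>b, c, a\<cdot>c, b\<cdot>c}"
      have cT: "card T = 7" unfolding T_def using h d2 d3 d4 d6 d7 d8 d9 d10 d11 d13 d14 d15 d16 d17
        by (simp add: eq_commute)
      have TL: "T \<subseteq> L" unfolding T_def by simp
      have bc: "b\<cdot>c \<in> L" "a\<cdot>b \<in> L" by simp_all
      have w: "a\<cdot>(b\<cdot>c) \<notin> T"
      proof
        assume "a\<cdot>(b\<cdot>c) \<in> T"
        then obtain t where t: "t \<in> T" "a\<cdot>(b\<cdot>c) = t" by blast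
        then have "b\<cdot>c = a\<cdot>t" using sw1[OF a bc(1) t(2)] by simp
        then have "b\<cdot>c \<in> (\<lambda>t. a\<cdot>t) ` T" using t(1) by blast
        then show False unfolding T_def using h d4 d8 d11 d14 d16 d17 S4[OF b c]
          by (auto simp: eq_commute)
      qed
      have u: "(a\<cdot>b)\<cdot>c \<notin> T"
      proof
        assume "(a\<cdot>b)\<cdot>c \<in> T"
        then obtain t where t: "t \<in> T" "(a\<cdot>b)\<cdot>c = t" by blast
        then have "a\<cdot>b = t\<cdot>c" using sw2[OF bc(2) c t(2)] by simp
        then have "a\<cdot>b \<in> (\<lambda>t. t\<cdot>c) ` T" using t(1) by blast
        then show False unfolding T_def using h d2 d6 d9 d13 d14
          by (auto simp: eq_commute)
      qed
      have "card (L - T) = 1" using card_Diff_subset[OF _ TL] cT n fin finite_subset[OF TL] by simp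
      then obtain z where z: "L - T = {z}" by (rule card_1_singletonE)
      have "a\<cdot>(b\<cdot>c) \<in> L - T" "(a\<cdot>b)\<cdot>c \<in> L - T" using w u by auto
      then show ?thesis unfolding assoc3_def using z by simp
    qed
  qed
qed

end



definition sgl :: "(nat \<times> nat) list" where
  "sgl = [(1, 1), (1, 3), (1, 5), (1, 6), (2, 1), (2, 2), (2, 6), (2, 7), (3, 2), (3, 3), (3, 5), (3, 7),
     (4, 1), (4, 2), (4, 3), (4, 4), (5, 2), (5, 4), (5, 5), (5, 6), (6, 3), (6, 4), (6, 6), (6, 7),
     (7, 1), (7, 4), (7, 5), (7, 7)]"

definition sg :: "nat \<Rightarrow> nat \<Rightarrow> bool" where "sg a b \<longleftrightarrow> (a, b) \<in> set sgl"

lemma less8: "a < (8::nat) \<longleftrightarrow> a \<in> {0,1,2,3,4,5,6,7}" by auto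

lemma chk1: "\<forall>b\<in>{0,1,2,3,4,5,6,7::nat}. \<forall>c\<in>{0,1,2,3,4,5,6,7::nat}. (sg b c \<noteq> sg b (xor b c)) = sg b b"
  by (simp add: sg_def sgl_def)

lemma chk2: "\<forall>a\<in>{0,1,2,3,4,5,6,7::nat}. \<forall>b\<in>{0,1,2,3,4,5,6,7::nat}. (sg a b \<noteq> sg (xor a b) b) = sg b b"
  by (simp add: sg_def sgl_def)

definition s8 :: "nat \<Rightarrow> nat \<Rightarrow> nat" where "s8 a b = (if sg a b then 8 else 0)"
definition og :: "nat \<Rightarrow> nat \<Rightarrow> nat" where "og x y = xor (xor x y) (s8 (x mod 8) (y mod 8))"

lemma xor_mod8: "xor x y mod 8 = xor (x mod 8) (y mod (8::nat))"
  using take_bit_xor[of 3 x y] by (simp add: take_bit_eq_mod)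

lemma s8_mod[simp]: "s8 a b mod 8 = 0" by (simp add: s8_def)

lemma xor_s8_mod[simp]: "xor x (s8 a b) mod 8 = x mod 8"
  by (simp add: xor_mod8)

lemma og_mod: "og x y mod 8 = xor (x mod 8) (y mod 8)"
  unfolding og_def by (simp add: xor_mod8)

lemma xor_lt: assumes "x < 2^k" "y < (2::nat)^k" shows "xor x y < 2^k"
proof -
  have "take_bit k x = x" "take_bit k y = y" using assms by (simp_all add: take_bit_nat_eq_self_iff)
  then have "take_bit k (xor x y) = xor x y" by simp
  then show ?thesis using take_bit_nat_less_exp[of k "xor x y"] by simp
qed

lemma xor_cancel[simp]: "xor x (xor x y) = (y::nat)"
  by (simp flip: xor.assoc)

lemmas xac = xor.assoc xor.commute xor.left_commute

lemma s8xor: "xor (s8 p q) (s8 r t) = (if sg p q \<noteq> sg r t then 8 else 0)"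
  by (simp add: s8_def)

lemma sg0[simp]: "\<not> sg 0 b" "\<not> sg a 0" by (auto simp: sg_def sgl_def)

lemma key: assumes "a < 8" "b < 8" "c < 8"
  shows "xor (s8 b c) (s8 b (xor b c)) = xor (s8 a b) (s8 (xor a b) b)"
proof -
  have 1: "(sg b c \<noteq> sg b (xor b c)) = sg b b" using chk1 assms unfolding less8 by blast
  have 2: "(sg a b \<noteq> sg (xor a b) b) = sg b b" using chk2 assms unfolding less8 by blast
  show ?thesis unfolding s8xor 1 2 ..
qed

lemma og_C: "og x (og y (og y z)) = og (og (og x y) y) z"
proof -
  define a b c where "a = x mod 8" and "b = y mod 8" and "c = z mod 8"
  have lt: "a < 8" "b < 8" "c < 8" unfolding a_def b_def c_def by simp_all
  have m1: "og y z mod 8 = xor b c" using og_mod b_def c_def by simp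
  have m2: "og y (og y z) mod 8 = c" using og_mod m1 b_def by simp
  have m3: "og x y mod 8 = xor a b" using og_mod a_def b_def by simp
  have m4: "og (og x y) y mod 8 = a" using og_mod m3 b_def by (simp add: xor.assoc)
  have e1: "og y z = xor (xor y z) (s8 b c)" unfolding og_def b_def c_def ..
  have e2: "og y (og y z) = xor (xor y (og y z)) (s8 b (xor b c))" unfolding og_def[of y "og y z"] m1 b_def ..
  have e3: "og x (og y (og y z)) = xor (xor x (og y (og y z))) (s8 a c)" unfolding og_def[of x] m2 a_def c_def ..
  have f1: "og x y = xor (xor x y) (s8 a b)" unfolding og_def a_def b_def ..
  have f2: "og (og x y) y = xor (xor (og x y) y) (s8 (xor a b) b)" unfolding og_def[of "og x y" y] m3 b_def ..
  have f3: "og (og (og x y) y) z = xor (xor (og (og x y) y) z) (s8 a c)" unfolding og_def[of "og (og x y) y" z] m4 a_def c_def ..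
  have L: "og x (og y (og y z)) = xor (xor x z) (xor (xor (s8 b c) (s8 b (xor b c))) (s8 a c))"
    unfolding e3 unfolding e2 unfolding e1 by (simp add: xac)
  have R: "og (og (og x y) y) z = xor (xor x z) (xor (xor (s8 a b) (s8 (xor a b) b)) (s8 a c))"
    unfolding f3 unfolding f2 unfolding f1 by (simp add: xac)
  show ?thesis using L R key[OF lt] by simp
qed

lemma og_solve: "xor (xor a x) S = (b::nat) \<Longrightarrow> x = xor (xor a b) S"
  by (auto simp: xac)

lemma example:
  assumes k: "k > (3::nat)"
  shows "\<exists>(M::nat set) g. finite M \<and> card M = 2 ^ k \<and> c_loop M g \<and> nonassociative M g \<and> \<not> steiner_loop M g"
proof (intro exI conjI)
  define M :: "nat set" where "M = {..<2^k}"
  have p16: "(16::nat) \<le> 2^k"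
  proof -
    have "(2::nat)^4 \<le> 2^k" using k by (intro power_increasing) auto
    then show ?thesis by simp
  qed
  have s8M: "s8 a b \<in> M" for a b unfolding M_def s8_def using p16 by auto
  have clo: "og x y \<in> M" if "x \<in> M" "y \<in> M" for x y
    using that s8M unfolding og_def M_def by (simp add: xor_lt)
  have id: "og 0 x = x" "og x 0 = x" for x by (simp_all add: og_def s8_def)
  show "finite M" unfolding M_def by simp
  show "card M = 2^k" unfolding M_def by simp
  show "c_loop M og"
    unfolding c_loop_def loop_def
  proof (intro conjI ballI)
    show "og x y \<in> M" if "x\<in>M" "y\<in>M" for x y using clo that by simp
    show "\<exists>e\<in>M. \<forall>x\<in>M. og e x = x \<and> og x e = x"
      by (rule bexI[of _ 0]) (use id p16 in \<open>auto simp: M_def\<close>)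
    show "og x (og y (og y z)) = og (og (og x y) y) z" for x y z by (rule og_C)
    show "\<exists>!x. x \<in> M \<and> og a x = b" if a: "a\<in>M" and b: "b\<in>M" for a b
    proof
      define x0 where "x0 = xor (xor a b) (s8 (a mod 8) (xor a b mod 8))"
      have x0m: "x0 mod 8 = xor a b mod 8" unfolding x0_def by simp
      show "x0 \<in> M \<and> og a x0 = b"
      proof
        show "x0 \<in> M" unfolding x0_def using a b s8M unfolding M_def by (simp add: xor_lt)
        show "og a x0 = b" unfolding og_def x0m unfolding x0_def by (simp add: xac)
      qed
      fix x assume h: "x \<in> M \<and> og a x = b"
      then have "og a x mod 8 = b mod 8" by simp
      then have "xor (a mod 8) (x mod 8) = b mod 8" using og_mod by simp
      then have "x mod 8 = xor a b mod 8" by (metis xor_cancel xor_mod8)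
      moreover have "x = xor (xor a b) (s8 (a mod 8) (x mod 8))"
        using h og_solve unfolding og_def by blast
      ultimately show "x = x0" unfolding x0_def by simp
    qed
    show "\<exists>!y. y \<in> M \<and> og y a = b" if a: "a\<in>M" and b: "b\<in>M" for a b
    proof
      define x0 where "x0 = xor (xor a b) (s8 (xor a b mod 8) (a mod 8))"
      have x0m: "x0 mod 8 = xor a b mod 8" unfolding x0_def by simp
      show "x0 \<in> M \<and> og x0 a = b"
      proof
        show "x0 \<in> M" unfolding x0_def using a b s8M unfolding M_def by (simp add: xor_lt)
        show "og x0 a = b" unfolding og_def x0m unfolding x0_def by (simp add: xac)
      qed
      fix x assume h: "x \<in> M \<and> og x a = b"
      then have "og x a mod 8 = b mod 8" by simp
      then have "xor (x mod 8) (a mod 8) = b mod 8" using og_mod by simp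
      then have "x mod 8 = xor a b mod 8" by (metis xor_cancel xor_mod8 xor.commute)
      moreover have "x = xor (xor a b) (s8 (x mod 8) (a mod 8))"
        using h og_solve[of a x "s8 (x mod 8) (a mod 8)" b] unfolding og_def by (simp add: xac)
      ultimately show "x = x0" unfolding x0_def by simp
    qed
  qed
  have abc: "(1::nat) \<in> M" "(2::nat) \<in> M" "(4::nat) \<in> M" "(8::nat) \<in> M" unfolding M_def using p16 by auto
  have na: "og 1 (og 2 4) \<noteq> og (og 1 2) 4"
    by (simp add: og_def s8_def sg_def sgl_def)
  show "nonassociative M og" unfolding nonassociative_def using abc na by blast
  show "\<not> steiner_loop M og"
  proof
    assume "steiner_loop M og"
    then obtain e where e: "e\<in>M" "\<forall>x\<in>M. og e x = x \<and> og x e = x" "\<forall>x\<in>M. og x x = e"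
      unfolding steiner_loop_def by blast
    have "og e 0 = 0" using e(2) unfolding M_def by auto
    then have "e = 0" using id(2)[of e] by simp
    moreover have "og 1 1 = 8" by (simp add: og_def s8_def sg_def sgl_def)
    ultimately show False using e(3) abc by auto
  qed
qed



theorem proposition3p1:
  fixes L :: "'a set" and f :: "'a \<Rightarrow> 'a \<Rightarrow> 'a" and n m :: nat
  assumes "finite L" and "c_loop L f" and "nonassociative L f"
    and "card L = n" and "card (nucleus L f) = m"
  shows "(m dvd n \<and> (n div m) mod 6 \<in> {2, 4})
       \<and> even n
       \<and> (\<forall>p k. prime p \<and> k > 0 \<and> n = p ^ k \<longrightarrow> p = 2 \<and> k > 3)
       \<and> (\<forall>k::nat. k > 3 \<longrightarrow> (\<exists>(M::nat set) g. finite M \<and> card M = 2 ^ k \<and>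
              c_loop M g \<and> nonassociative M g \<and> \<not> steiner_loop M g))"
proof -
  note fin = assms(1) and na = assms(3)
  have LP: "loop L f" using assms(2) unfolding c_loop_def by (rule conjunct1)
  have CC: "\<forall>x\<in>L. \<forall>y\<in>L. \<forall>z\<in>L. f x (f y (f y z)) = f (f (f x y) y) z"
    using assms(2) unfolding c_loop_def by (rule conjunct2)
  note l = LP[unfolded loop_def]
  have l1: "\<forall>x\<in>L. \<forall>y\<in>L. f x y \<in> L" using l by (rule conjunct1)
  have l2: "\<exists>e\<in>L. \<forall>x\<in>L. f e x = x \<and> f x e = x" using l[THEN conjunct2] by (rule conjunct1)
  have l3: "\<forall>a\<in>L. \<forall>b\<in>L. \<exists>!x. x \<in> L \<and> f a x = b" using l[THEN conjunct2, THEN conjunct2] by (rule conjunct1)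
  have l4: "\<forall>a\<in>L. \<forall>b\<in>L. \<exists>!y. y \<in> L \<and> f y a = b" using l[THEN conjunct2, THEN conjunct2] by (rule conjunct2)
  obtain e where e: "e\<in>L" "\<forall>x\<in>L. f e x = x \<and> f x e = x" using l2 by (elim bexE) 
  interpret cl L f e
  proof
    show "\<And>x y. x\<in>L \<Longrightarrow> y\<in>L \<Longrightarrow> f x y \<in> L" using l1 by simp
    show "e\<in>L" by (rule e(1))
    show "\<And>x. x\<in>L \<Longrightarrow> f e x = x" "\<And>x. x\<in>L \<Longrightarrow> f x e = x" using e(2) by simp_all
    show "\<And>a b. a\<in>L \<Longrightarrow> b\<in>L \<Longrightarrow> \<exists>!x. x\<in>L \<and> f a x = b" using l3 by simp
    show "\<And>a b. a\<in>L \<Longrightarrow> b\<in>L \<Longrightarrow> \<exists>!y. y\<in>L \<and> f y a = b" using l4 by simp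
    show "\<And>x y z. x\<in>L \<Longrightarrow> y\<in>L \<Longrightarrow> z\<in>L \<Longrightarrow> f x (f y (f y z)) = f (f (f x y) y) z"
      using CC by simp
  qed
  define q where "q = card Qs"
  have nmq: "n = m * q" using card_L[OF fin] assms(4,5) q_def by simp
  have finN: "finite (nucleus L f)" using fin finite_subset[of "nucleus L f" L] nL by blast
  have mpos: "m > 0" using finN eN assms(5) card_gt_0_iff by blast
  have q6: "q mod 6 = 2 \<or> q mod 6 = 4" using part1[OF fin na] q_def by simp
  have P1: "m dvd n \<and> (n div m) mod 6 \<in> {2, 4}" using nmq mpos q6 by auto
  have qev: "even q" using q6 by presburger
  have P2: "even n" using nmq qev by simp
  have P3: "\<forall>p k. prime p \<and> k > 0 \<and> n = p ^ k \<longrightarrow> p = 2 \<and> k > 3"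
  proof (intro allI impI)
    fix p k :: nat assume h: "prime p \<and> k > 0 \<and> n = p ^ k"
    have "2 dvd p ^ k" using P2 h by simp
    then have "2 dvd p" using prime_dvd_power[of 2 p k] by simp
    then have p2: "p = 2" using h primes_dvd_imp_eq[of 2 p] two_is_prime_nat by blast
    have "k > 3"
    proof (rule ccontr)
      assume "\<not> k > 3"
      then have "k \<le> 3" by simp
      then have "n \<le> 8" using h p2 power_increasing[of k 3 "2::nat"] by simp
      then have le8: "m * q \<le> 8" using nmq by simp
      moreover have "q \<le> m * q" using mpos by simp
      ultimately have "q \<le> 8" by linarith
      then have "q = 2 \<or> q = 4 \<or> q = 8" using q6 by presburger
      then show False
      proof (elim disjE)
        assume "q = 2" then show False using q2[OF fin] na q_def by simp
      next
        assume q4': "q = 4"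
        then have "m \<le> 2" using le8 by simp
        then have "cenexp2" using cenexp2_small[OF fin] assms(5) by simp
        then show False using q4[OF fin] na q_def q4' by simp
      next
        assume q8': "q = 8"
        then have "m = 1" using le8 mpos by simp
        moreover have "n = 8" using nmq q8' \<open>m = 1\<close> by simp
        ultimately show False using q8[OF fin] na assms(4,5) by simp
      qed
    qed
    then show "p = 2 \<and> k > 3" using p2 by simp
  qed
  have P4: "\<forall>k::nat. k > 3 \<longrightarrow> (\<exists>(M::nat set) g. finite M \<and> card M = 2 ^ k \<and>
              c_loop M g \<and> nonassociative M g \<and> \<not> steiner_loop M g)"
  proof (intro allI impI)
    fix k :: nat assume "k > 3"
    then show "\<exists>(M::nat set) g. finite M \<and> card M = 2 ^ k \<and>
              c_loop M g \<and> nonassociative M g \<and> \<not> steiner_loop M g" by (rule example)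
  qed
  show ?thesis by (rule conjI[OF P1 conjI[OF P2 conjI[OF P3 P4]]])
qed

end
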